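(* Consider binary floating-point arithmetic with precision $p\ge 4$ and unit round-off $u=2^{-p}$, operations correctly rounded to nearest ($\mathrm{RN}$), barring overflow and underflow. For floating-point inputs $x,y$ consider the algorithm: if $|x|<|y|$ swap $x$ and $y$; $(s_x^h,s_x^\ell)\gets\mathrm{Fast2Mult}(x,x)$; $(s_y^h,s_y^\ell)\gets\mathrm{Fast2Mult}(y,y)$; $(\sigma_h,\sigma_\ell)\gets\mathrm{Fast2Sum}(s_x^h,s_y^h)$; $s\gets\mathrm{RN}(\sqrt{\sigma_h})$; $\delta_s\gets\mathrm{RN}(\sigma_h-s^2)$; $\tau_1\gets\mathrm{RN}(s_x^\ell+s_y^\ell)$; $\tau_2\gets\mathrm{RN}(\delta_s+\sigma_\ell)$; $\tau\gets\mathrm{RN}(\tau_1+\tau_2)$; $c\gets\mathrm{RN}(\tau/s)$; $\rho_4\gets\mathrm{RN}(c/2+s)$. Then the relative error $|\rho_4/\sqrt{x^2+y^2}-1|$ is bounded by $u+(7+\kappa)u^2$, where $\kappa\le 21.4$ if $u\le 2^{-4}$; $\kappa\le 6.1$ if $u\le 2^{-5}$; $\kappa\le 2.5$ if $u\le2^{-6}$; $\kappa\le 1.2$ if $u\le 2^{-7}$; $\kappa\le 0.6$ if $u\le 2^{-8}$; $\kappa\le 7\cdot10^{-2}$ if $u\le 2^{-11}$; $\kappa\le 8\cdot 10^{-6}$ if $u\le 2^{-24}$; $\kappa\le 2\cdot10^{-14}$ if $u\le 2^{-53}$; $\kappa\le 2\cdot 10^{-32}$ if $u\le 2^{-113}$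.
   Context: A radix-2 floating-point number of precision $p$ has the form $M\cdot 2^{e-p+1}$ with integers $|M|\le 2^p-1$ and $e_{\min}\le e\le e_{\max}$. $\mathrm{RN}$ is rounding to nearest (ties-to-even). $\mathrm{Fast2Mult}(a,b)$ returns the pair of floating-point numbers $(h,\ell)$ with $h=\mathrm{RN}(ab)$ and $\ell = ab-h$ exactly; $\mathrm{Fast2Sum}(a,b)$ returns $(h,\ell)$ with $h=\mathrm{RN}(a+b)$ and $\ell=(a+b)-h$ exactly. The computation $\delta_s = \mathrm{RN}(\sigma_h-s^2)$ is done with a single rounding (FMA). *)

theory Defs
  imports Complex_Main
begin

text \<open>Binary floating-point numbers of precision p with unbounded exponent range
  (this models "barring overflow and underflow"): x = M * 2^e with integers M, e and |M| < 2^p.\<close>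

definition is_float :: "nat \<Rightarrow> real \<Rightarrow> bool" where
  "is_float p x \<longleftrightarrow> (\<exists>M e :: int. x = real_of_int M * 2 powr real_of_int e \<and> \<bar>M\<bar> < 2 ^ p)"

definition even_float :: "nat \<Rightarrow> real \<Rightarrow> bool" where
  "even_float p x \<longleftrightarrow> x = 0 \<or>
     (\<exists>M e :: int. x = real_of_int M * 2 powr real_of_int e \<and>
        2 ^ (p - 1) \<le> \<bar>M\<bar> \<and> \<bar>M\<bar> < 2 ^ p \<and> even M)"

definition RN :: "nat \<Rightarrow> real \<Rightarrow> real" where
  "RN p x = (THE f. is_float p f \<and> (\<forall>g. is_float p g \<longrightarrow> \<bar>x - f\<bar> \<le> \<bar>x - g\<bar>) \<and>
       ((\<forall>g. is_float p g \<and> \<bar>x - g\<bar> = \<bar>x - f\<bar> \<longrightarrow> g = f) \<or> even_float p f))"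

definition Fast2Mult :: "nat \<Rightarrow> real \<Rightarrow> real \<Rightarrow> real \<times> real" where
  "Fast2Mult p a b = (RN p (a * b), a * b - RN p (a * b))"

definition Fast2Sum :: "nat \<Rightarrow> real \<Rightarrow> real \<Rightarrow> real \<times> real" where
  "Fast2Sum p a b = (RN p (a + b), (a + b) - RN p (a + b))"

definition hypot4 :: "nat \<Rightarrow> real \<Rightarrow> real \<Rightarrow> real" where
  "hypot4 p x0 y0 =
    (let (x, y) = (if \<bar>x0\<bar> < \<bar>y0\<bar> then (y0, x0) else (x0, y0));
         (sxh, sxl) = Fast2Mult p x x;
         (syh, syl) = Fast2Mult p y y;
         (\<sigma>h, \<sigma>l) = Fast2Sum p sxh syh;
         s = RN p (sqrt \<sigma>h);
         \<delta>s = RN p (\<sigma>h - s^2);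
         \<tau>1 = RN p (sxl + syl);
         \<tau>2 = RN p (\<delta>s + \<sigma>l);
         \<tau> = RN p (\<tau>1 + \<tau>2);
         c = RN p (\<tau> / s)
     in RN p (c / 2 + s))"

end

theory Submission
  imports Defs
begin


lemma abs_norm:
  fixes u A B sxh syh sh s t1 t2 t c rho :: real
  assumes u0: "0 < u" and u1: "u \<le> 1/16"
    and A0: "A \<ge> 0" and B0: "B \<ge> 0" and AB: "A + B = 1"
    and hx: "\<bar>sxh - A\<bar> \<le> u * A" and hy: "\<bar>syh - B\<bar> \<le> u * B"
    and hsh: "\<bar>sh - (sxh + syh)\<bar> \<le> u * \<bar>sxh + syh\<bar>"
    and hs: "\<bar>s - sqrt sh\<bar> \<le> u * \<bar>sqrt sh\<bar>"
    and ht1: "\<bar>t1 - (A - sxh + (B - syh))\<bar> \<le> u * \<bar>A - sxh + (B - syh)\<bar>"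
    and ht2: "\<bar>t2 - (sh - s^2 + (sxh + syh - sh))\<bar> \<le> u * \<bar>sh - s^2 + (sxh + syh - sh)\<bar>"
    and ht: "\<bar>t - (t1 + t2)\<bar> \<le> u * \<bar>t1 + t2\<bar>"
    and hc: "\<bar>c - t / s\<bar> \<le> u * \<bar>t / s\<bar>"
    and hr: "\<bar>rho - (c/2 + s)\<bar> \<le> u / (1 + u) * \<bar>c/2 + s\<bar>"
  shows "\<bar>rho - 1\<bar> \<le> u + 7 * u^2 + 100 * u^3"
proof -
  have p2: "u^2 \<ge> 0" by simp
  have p3: "u^3 \<le> u^2/16" "u^3 \<ge> 0" using u0 u1 by (auto simp: power_def)
  have p4: "u^4 \<le> u^3/16" "u^4 \<ge> 0" using u0 u1 by (auto simp: power_def)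
  have p5: "u^5 \<le> u^4/16" "u^5 \<ge> 0" using u0 u1 by (auto simp: power_def)
  define Q where "Q = sxh + syh"
  have h1: "\<bar>Q - 1\<bar> \<le> u"
  proof -
    have "\<bar>Q - 1\<bar> = \<bar>(sxh - A) + (syh - B)\<bar>" using AB by (simp add: Q_def algebra_simps)
    also have "\<dots> \<le> u*A + u*B" using hx hy by linarith
    also have "u*A + u*B = u" using AB by (metis distrib_left mult_1_right)
    finally show ?thesis .
  qed
  have Qpos: "Q > 0" using h1 u1 by linarith
  have h2: "\<bar>sh - Q\<bar> \<le> u*Q" using hsh Qpos by (simp add: Q_def)
  have uQ: "u*Q \<le> u + u^2"
  proof -
    have "u*Q \<le> u*(1+u)" using h1 u0 by (intro mult_left_mono) auto
    thus ?thesis by (simp add: power2_eq_square algebra_simps)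
  qed
  have sh_lo: "sh \<ge> (1-u)^2"
  proof -
    have "(1-u)*(1-u) \<le> (1-u)*Q" using h1 u1 by (intro mult_left_mono) auto
    thus ?thesis using h2 by (simp add: power2_eq_square algebra_simps)
  qed
  have sh_hi: "sh \<le> (1+u)^2"
  proof -
    have "(1+u)*Q \<le> (1+u)*(1+u)" using h1 u0 by (intro mult_left_mono) auto
    thus ?thesis using h2 by (simp add: power2_eq_square algebra_simps)
  qed
  define r where "r = sqrt sh"
  have shpos: "sh > 0"
  proof -
    have "(1-u)^2 > 0" using u1 by simp
    thus ?thesis using sh_lo by linarith
  qed
  have r2: "r^2 = sh" using shpos by (simp add: r_def)
  have r_lo: "r \<ge> 1 - u"
  proof -
    have "sqrt ((1-u)^2) \<le> sqrt sh" using sh_lo by (rule real_sqrt_le_mono)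
    thus ?thesis using u1 by (simp add: r_def)
  qed
  have r_hi: "r \<le> 1 + u"
  proof -
    have "sqrt sh \<le> sqrt ((1+u)^2)" using sh_hi by (rule real_sqrt_le_mono)
    thus ?thesis using u0 by (simp add: r_def)
  qed
  have hs': "\<bar>s - r\<bar> \<le> u*r" using hs r_def shpos by simp
  define d where "d = sh - s^2"
  have dfac: "d = (r - s) * (r + s)" using r2 by (simp add: d_def power2_eq_square algebra_simps)
  have rs: "\<bar>r + s\<bar> \<le> (2+u)*r" using hs' r_lo u1 by (simp add: algebra_simps abs_le_iff)
  have hd: "\<bar>d\<bar> \<le> 2*u + 6*u^2"
  proof -
    have "\<bar>d\<bar> = \<bar>r - s\<bar> * \<bar>r + s\<bar>" by (simp add: dfac abs_mult)
    also have "\<dots> \<le> (u*r) * ((2+u)*r)" using hs' rs by (intro mult_mono) (auto simp: abs_minus_commute)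
    also have "\<dots> = u*(2+u)*r^2" by (simp add: power2_eq_square algebra_simps)
    also have "\<dots> = u*(2+u)*sh" by (simp add: r2)
    also have "\<dots> \<le> u*(2+u)*(1+u)^2" using sh_hi u0 by (intro mult_left_mono) auto
    also have "\<dots> = 2*u + 5*u^2 + 4*u^3 + u^4" by (simp add: power2_eq_square power3_eq_cube algebra_simps power_def eval_nat_numeral)
    also have "\<dots> \<le> 2*u + 6*u^2" using p3 p4 by linarith
    finally show ?thesis .
  qed
  define sl where "sl = Q - sh"
  have hsl: "\<bar>sl\<bar> \<le> u + u^2" using h2 uQ by (simp add: sl_def abs_minus_commute)
  define X1 where "X1 = A - sxh + (B - syh)"
  have X1eq: "X1 = 1 - Q" using AB by (simp add: X1_def Q_def algebra_simps)
  have hX1: "\<bar>X1\<bar> \<le> u" using h1 X1eq by (simp add: abs_minus_commute)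
  define X2 where "X2 = sh - s^2 + (sxh + syh - sh)"
  have X2eq: "X2 = d + sl" by (simp add: X2_def d_def sl_def Q_def)
  have hX2: "\<bar>X2\<bar> \<le> 3*u + 7*u^2" using hd hsl X2eq by linarith
  define T where "T = 1 - s^2"
  have Teq: "T = X1 + X2" using X1eq X2eq by (simp add: T_def d_def sl_def)
  have hT: "\<bar>T\<bar> \<le> 4*u + 7*u^2" using hX1 hX2 Teq by linarith
  have e5: "\<bar>t1 - X1\<bar> \<le> u^2"
  proof -
    have "u * \<bar>X1\<bar> \<le> u * u" using hX1 u0 by (intro mult_left_mono) auto
    thus ?thesis using ht1 by (simp add: X1_def power2_eq_square)
  qed
  have e6: "\<bar>t2 - X2\<bar> \<le> 3*u^2 + 7*u^3"
  proof -
    have "u * \<bar>X2\<bar> \<le> u * (3*u + 7*u^2)" using hX2 u0 by (intro mult_left_mono) auto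
    also have "\<dots> = 3*u^2 + 7*u^3" by (simp add: power2_eq_square power3_eq_cube algebra_simps)
    finally show ?thesis using ht2 by (simp add: X2_def)
  qed
  have t12: "\<bar>t1 + t2\<bar> \<le> 4*u + 12*u^2" using hT Teq e5 e6 p3 by linarith
  have e7: "\<bar>t - (t1 + t2)\<bar> \<le> 4*u^2 + 12*u^3"
  proof -
    have "u * \<bar>t1 + t2\<bar> \<le> u * (4*u + 12*u^2)" using t12 u0 by (intro mult_left_mono) auto
    also have "\<dots> = 4*u^2 + 12*u^3" by (simp add: power2_eq_square power3_eq_cube algebra_simps)
    finally show ?thesis using ht by linarith
  qed
  have htb: "\<bar>t\<bar> \<le> 4*u + 17*u^2" using t12 e7 p3 by linarith
  have E1: "\<bar>t - T\<bar> \<le> 8*u^2 + 19*u^3" using e5 e6 e7 Teq by linarith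
  have s_lo: "s \<ge> 1 - 2*u"
  proof -
    have "(1-u)*(1-u) \<le> (1-u)*r" using r_lo u1 by (intro mult_left_mono) auto
    moreover have "s \<ge> r - u*r" using hs' by linarith
    moreover have "(1-u)*(1-u) = 1 - 2*u + u*u" "(1-u)*r = r - u*r" by (simp_all add: algebra_simps)
    moreover have "u*u \<ge> 0" by simp
    ultimately show ?thesis by linarith
  qed
  have spos: "s > 0" using s_lo u1 by linarith
  have Tfac: "T = (1 - s) * (1 + s)" by (simp add: T_def power2_eq_square algebra_simps)
  have h1s: "\<bar>1 - s\<bar> \<le> 2*u + 6*u^2"
  proof -
    have a: "(2*u + 6*u^2) * (2 - 2*u) = 4*u + 8*u^2 - 12*u^3" by (simp add: power2_eq_square power3_eq_cube algebra_simps)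
    have b: "(2*u + 6*u^2) * (2 - 2*u) \<le> (2*u + 6*u^2) * (1 + s)" using s_lo u0 by (intro mult_left_mono) auto
    have "\<bar>1 - s\<bar> * (1 + s) = \<bar>T\<bar>" using Tfac spos by (simp add: abs_mult)
    also have "\<dots> \<le> (2*u + 6*u^2) * (1 + s)" using hT a b p3 by linarith
    finally show ?thesis using spos by (meson mult_right_le_imp_le add_pos_pos zero_less_one)
  qed
  have sq1s: "(1 - s)^2 \<le> 4*u^2 + 27*u^3"
  proof -
    have "(1 - s)^2 = \<bar>1 - s\<bar>^2" by simp
    also have "\<dots> \<le> (2*u + 6*u^2)^2" using h1s by (intro power_mono) auto
    also have "\<dots> = 4*u^2 + 24*u^3 + 36*u^4" by (simp add: power2_eq_square power3_eq_cube eval_nat_numeral algebra_simps)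
    also have "\<dots> \<le> 4*u^2 + 27*u^3" using p4 by linarith
    finally show ?thesis .
  qed
  have s_lo2: "s \<ge> 1 - 2*u - 6*u^2" using h1s by linarith
  define e8 where "e8 = c - t/s"
  have se8: "\<bar>s * e8\<bar> \<le> u * \<bar>t\<bar>"
  proof -
    have "\<bar>s * e8\<bar> = s * \<bar>e8\<bar>" using spos by (simp add: abs_mult)
    also have "\<dots> \<le> s * (u * \<bar>t / s\<bar>)" using hc spos by (intro mult_left_mono) (auto simp: e8_def)
    also have "\<dots> = u * \<bar>t\<bar>" using spos by (simp add: abs_divide)
    finally show ?thesis .
  qed
  have ut: "u * \<bar>t\<bar> \<le> 4*u^2 + 17*u^3"
  proof -
    have "u * \<bar>t\<bar> \<le> u * (4*u + 17*u^2)" using htb u0 by (intro mult_left_mono) auto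
    also have "\<dots> = 4*u^2 + 17*u^3" by (simp add: power2_eq_square power3_eq_cube algebra_simps)
    finally show ?thesis .
  qed
  define z where "z = c/2 + s"
  have zid: "(z - 1) * (2*s) = (1 - s)^2 + (t - T) + s * e8"
    using spos by (simp add: z_def e8_def T_def power2_eq_square field_simps)
  have N: "\<bar>z - 1\<bar> * (2*s) \<le> 16*u^2 + 63*u^3"
  proof -
    have "\<bar>z - 1\<bar> * (2*s) = \<bar>(z - 1) * (2*s)\<bar>" using spos by (simp add: abs_mult)
    also have "\<dots> \<le> (1 - s)^2 + \<bar>t - T\<bar> + \<bar>s * e8\<bar>" unfolding zid by (simp add: abs_triangle_ineq order_trans[OF abs_triangle_ineq] add_mono)
    also have "\<dots> \<le> 16*u^2 + 63*u^3" using sq1s E1 se8 ut by linarith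
    finally show ?thesis .
  qed
  have eta: "\<bar>z - 1\<bar> \<le> 8*u^2 + 60*u^3"
  proof -
    have a: "(8*u^2 + 60*u^3) * (2 - 4*u - 12*u^2) = 16*u^2 + 88*u^3 - 336*u^4 - 720*u^5"
      by (simp add: power2_eq_square power3_eq_cube eval_nat_numeral algebra_simps)
    have b: "(8*u^2 + 60*u^3) * (2 - 4*u - 12*u^2) \<le> (8*u^2 + 60*u^3) * (2*s)"
      using s_lo2 p2 p3 by (intro mult_left_mono) auto
    have "\<bar>z - 1\<bar> * (2*s) \<le> (8*u^2 + 60*u^3) * (2*s)" using N a b p4 p5 by linarith
    thus ?thesis using spos by (meson mult_right_le_imp_le mult_pos_pos zero_less_numeral)
  qed
  have zb: "\<bar>z\<bar> \<le> 1 + (8*u^2 + 60*u^3)" using eta by linarith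
  have hr': "\<bar>rho - z\<bar> \<le> u / (1 + u) * (1 + (8*u^2 + 60*u^3))"
  proof -
    have "\<bar>rho - z\<bar> \<le> u / (1 + u) * \<bar>z\<bar>" using hr by (simp add: z_def)
    also have "\<dots> \<le> u / (1 + u) * (1 + (8*u^2 + 60*u^3))" using zb u0 by (intro mult_left_mono) auto
    finally show ?thesis .
  qed
  define et where "et = 8*u^2 + 60*u^3"
  have fin: "u / (1 + u) * (1 + et) + et \<le> u + 7 * u^2 + 100 * u^3"
  proof -
    have a: "u * (1 + et) + et * (1 + u) = u + 8*u^2 + 76*u^3 + 120*u^4"
      by (simp add: et_def power2_eq_square power3_eq_cube eval_nat_numeral algebra_simps)
    have b: "(u + 7 * u^2 + 100 * u^3) * (1 + u) = u + 8*u^2 + 107*u^3 + 100*u^4"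
      by (simp add: power2_eq_square power3_eq_cube eval_nat_numeral algebra_simps)
    have c: "u / (1 + u) * (1 + et) + et = (u * (1 + et) + et * (1 + u)) / (1 + u)"
      using u0 by (simp add: field_simps)
    have "u * (1 + et) + et * (1 + u) \<le> (u + 7 * u^2 + 100 * u^3) * (1 + u)" using a b p4 by linarith
    thus ?thesis unfolding c using u0 by (simp add: divide_le_eq)
  qed
  show ?thesis using hr' eta fin unfolding et_def by linarith
qed


definition nearP :: "(real \<Rightarrow> bool) \<Rightarrow> (real \<Rightarrow> bool) \<Rightarrow> real \<Rightarrow> real \<Rightarrow> bool" where
  "nearP F E v f \<longleftrightarrow> F f \<and> (\<forall>g. F g \<longrightarrow> \<bar>v - f\<bar> \<le> \<bar>v - g\<bar>) \<and>
       ((\<forall>g. F g \<and> \<bar>v - g\<bar> = \<bar>v - f\<bar> \<longrightarrow> g = f) \<or> E f)"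

lemma RN_alt: "RN p v = (THE f. nearP (is_float p) (even_float p) v f)"
  by (simp add: RN_def nearP_def)

lemma nearP_self:
  assumes "F v"
  shows "nearP F E v v \<and> (\<forall>f. nearP F E v f \<longrightarrow> f = v)"
  using assms unfolding nearP_def by auto

lemma two_nb:
  assumes lv: "lo < v" and vh: "v < hi" and Flo: "F lo" and Fhi: "F hi"
    and gap: "\<And>g. F g \<Longrightarrow> g \<le> lo \<or> g \<ge> hi"
    and E1: "\<not> (E lo \<and> E hi)" and E2: "v - lo = hi - v \<Longrightarrow> E lo \<or> E hi"
  shows "\<exists>f. (f = lo \<or> f = hi) \<and> \<bar>f - v\<bar> \<le> (hi - lo)/2 \<and> nearP F E v f \<and> (\<forall>f'. nearP F E v f' \<longrightarrow> f' = f)"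
proof -
  have dl: "\<bar>v - lo\<bar> = v - lo" and dh: "\<bar>v - hi\<bar> = hi - v" using lv vh by auto
  have gl: "\<And>g. F g \<Longrightarrow> g \<le> lo \<Longrightarrow> \<bar>v - g\<bar> = v - g" using lv by auto
  have gh: "\<And>g. F g \<Longrightarrow> g \<ge> hi \<Longrightarrow> \<bar>v - g\<bar> = g - v" using vh by auto
  consider (a) "v - lo < hi - v" | (b) "hi - v < v - lo" | (c) "v - lo = hi - v" by linarith
  then show ?thesis
  proof cases
    case a
    have key: "\<And>g. F g \<Longrightarrow> \<bar>v - g\<bar> \<le> v - lo \<Longrightarrow> g = lo"
    proof -
      fix g assume g: "F g" "\<bar>v - g\<bar> \<le> v - lo"
      from gap[OF g(1)] show "g = lo"
      proof
        assume "g \<le> lo" then show ?thesis using gl[OF g(1)] g(2) by linarith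
      next
        assume "g \<ge> hi" then show ?thesis using gh[OF g(1)] g(2) a by linarith
      qed
    qed
    have le: "\<And>g. F g \<Longrightarrow> v - lo \<le> \<bar>v - g\<bar>"
    proof -
      fix g assume g: "F g"
      from gap[OF g] show "v - lo \<le> \<bar>v - g\<bar>"
      proof
        assume "g \<le> lo" then show ?thesis using gl[OF g] by linarith
      next
        assume "g \<ge> hi" then show ?thesis using gh[OF g] a by linarith
      qed
    qed
    have n: "nearP F E v lo" unfolding nearP_def dl using Flo le key by auto
    have u: "\<forall>f'. nearP F E v f' \<longrightarrow> f' = lo"
    proof (intro allI impI)
      fix f' assume "nearP F E v f'"
      then have "F f'" "\<bar>v - f'\<bar> \<le> \<bar>v - lo\<bar>" using Flo unfolding nearP_def by auto
      then show "f' = lo" using key dl by auto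
    qed
    have "\<bar>lo - v\<bar> = v - lo" using lv by simp
    then have "\<bar>lo - v\<bar> \<le> (hi - lo)/2" using a by (simp add: field_simps)
    then show ?thesis using n u by blast
  next
    case b
    have key: "\<And>g. F g \<Longrightarrow> \<bar>v - g\<bar> \<le> hi - v \<Longrightarrow> g = hi"
    proof -
      fix g assume g: "F g" "\<bar>v - g\<bar> \<le> hi - v"
      from gap[OF g(1)] show "g = hi"
      proof
        assume "g \<le> lo" then show ?thesis using gl[OF g(1)] g(2) b by linarith
      next
        assume "g \<ge> hi" then show ?thesis using gh[OF g(1)] g(2) by linarith
      qed
    qed
    have le: "\<And>g. F g \<Longrightarrow> hi - v \<le> \<bar>v - g\<bar>"
    proof -
      fix g assume g: "F g"
      from gap[OF g] show "hi - v \<le> \<bar>v - g\<bar>"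
      proof
        assume "g \<le> lo" then show ?thesis using gl[OF g] b by linarith
      next
        assume "g \<ge> hi" then show ?thesis using gh[OF g] by linarith
      qed
    qed
    have n: "nearP F E v hi" unfolding nearP_def dh using Fhi le key by auto
    have u: "\<forall>f'. nearP F E v f' \<longrightarrow> f' = hi"
    proof (intro allI impI)
      fix f' assume "nearP F E v f'"
      then have "F f'" "\<bar>v - f'\<bar> \<le> \<bar>v - hi\<bar>" using Fhi unfolding nearP_def by auto
      then show "f' = hi" using key dh by auto
    qed
    have "\<bar>hi - v\<bar> = hi - v" using vh by simp
    then have "\<bar>hi - v\<bar> \<le> (hi - lo)/2" using b by (simp add: field_simps)
    then show ?thesis using n u by blast
  next
    case c
    have near: "\<And>g. F g \<Longrightarrow> \<bar>v - g\<bar> \<le> v - lo \<Longrightarrow> g = lo \<or> g = hi"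
    proof -
      fix g assume g: "F g" "\<bar>v - g\<bar> \<le> v - lo"
      from gap[OF g(1)] show "g = lo \<or> g = hi"
      proof
        assume "g \<le> lo" then show ?thesis using gl[OF g(1)] g(2) by linarith
      next
        assume "g \<ge> hi" then show ?thesis using gh[OF g(1)] g(2) c by linarith
      qed
    qed
    have lo_n: "\<And>g. F g \<Longrightarrow> v - lo \<le> \<bar>v - g\<bar>"
    proof -
      fix g assume g: "F g"
      from gap[OF g] show "v - lo \<le> \<bar>v - g\<bar>"
      proof
        assume "g \<le> lo" then show ?thesis using gl[OF g] by linarith
      next
        assume "g \<ge> hi" then show ?thesis using gh[OF g] c by linarith
      qed
    qed
    have eqd: "\<bar>v - hi\<bar> = \<bar>v - lo\<bar>" using c dl dh by linarith
    have sol: "\<And>f. f = lo \<or> f = hi \<Longrightarrow> E f \<Longrightarrow> nearP F E v f"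
    proof -
      fix f assume f: "f = lo \<or> f = hi" "E f"
      have "F f" using f Flo Fhi by blast
      moreover have "\<bar>v - f\<bar> = v - lo" using f(1) eqd dl by auto
      ultimately show "nearP F E v f" unfolding nearP_def using lo_n f(2) by auto
    qed
    have notu: "\<And>f'. nearP F E v f' \<Longrightarrow> E f' \<and> (f' = lo \<or> f' = hi)"
    proof -
      fix f' assume h: "nearP F E v f'"
      then have "F f'" "\<bar>v - f'\<bar> \<le> \<bar>v - lo\<bar>" using Flo unfolding nearP_def by auto
      then have f'c: "f' = lo \<or> f' = hi" using near dl by auto
      have df': "\<bar>v - f'\<bar> = \<bar>v - lo\<bar>" "\<bar>v - f'\<bar> = \<bar>v - hi\<bar>" using f'c eqd by auto
      have "\<not> (\<forall>g. F g \<and> \<bar>v - g\<bar> = \<bar>v - f'\<bar> \<longrightarrow> g = f')"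
      proof
        assume H: "\<forall>g. F g \<and> \<bar>v - g\<bar> = \<bar>v - f'\<bar> \<longrightarrow> g = f'"
        have "lo = f'" using H Flo df' by metis
        moreover have "hi = f'" using H Fhi df' by metis
        ultimately show False using lv vh by auto
      qed
      then show "E f' \<and> (f' = lo \<or> f' = hi)" using h f'c unfolding nearP_def by blast
    qed
    from E2[OF c] obtain f where f: "f = lo \<or> f = hi" "E f" by blast
    have "\<forall>f'. nearP F E v f' \<longrightarrow> f' = f" using notu f E1 by blast
    moreover have "\<bar>f - v\<bar> \<le> (hi - lo)/2" using f(1) c lv vh by auto
    ultimately show ?thesis using sol[OF f] f(1) by blast
  qed
qed


lemma pow_pred: "p \<ge> 1 \<Longrightarrow> (2::'a::comm_semiring_1) ^ p = 2 * 2 ^ (p - 1)"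
proof -
  assume "p \<ge> 1"
  then obtain q where "p = Suc q" by (cases p) auto
  then show ?thesis by simp
qed

lemma powr_int_split:
  assumes "e \<le> k"
  shows "(2::real) powr real_of_int k = 2 powr real_of_int e * 2 ^ nat (k - e)"
proof -
  have "real_of_int k = real_of_int e + real (nat (k - e))" using assms by simp
  then have "(2::real) powr real_of_int k = 2 powr (real_of_int e + real (nat (k - e)))"
    by (rule arg_cong)
  also have "\<dots> = 2 powr real_of_int e * 2 powr real (nat (k - e))"
    by (rule powr_add)
  also have "(2::real) powr real (nat (k - e)) = 2 ^ nat (k - e)" by (simp add: powr_realpow)
  finally show ?thesis .
qed

lemma float_neg1: "is_float p x \<Longrightarrow> is_float p (-x)"
proof -
  assume "is_float p x"
  then obtain M e where h: "x = real_of_int M * 2 powr real_of_int e" "\<bar>M\<bar> < 2 ^ p"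
    unfolding is_float_def by blast
  show "is_float p (-x)" unfolding is_float_def
    by (rule exI[of _ "-M"], rule exI[of _ e]) (simp add: h)
qed

lemma float_neg: "is_float p (-x) \<longleftrightarrow> is_float p x"
  using float_neg1[of p x] float_neg1[of p "-x"] by auto

lemma even_float_neg1: "even_float p x \<Longrightarrow> even_float p (-x)"
proof -
  assume a: "even_float p x"
  show "even_float p (-x)"
  proof (cases "x = 0")
    case True then show ?thesis by (simp add: even_float_def)
  next
    case False
    then obtain M e where h: "x = real_of_int M * 2 powr real_of_int e" "2 ^ (p - 1) \<le> \<bar>M\<bar>" "\<bar>M\<bar> < 2 ^ p" "even M"
      using a unfolding even_float_def by blast
    show ?thesis unfolding even_float_def
      by (rule disjI2, rule exI[of _ "-M"], rule exI[of _ e]) (use h in simp)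
  qed
qed

lemma even_float_neg: "even_float p (-x) \<longleftrightarrow> even_float p x"
  using even_float_neg1[of p x] even_float_neg1[of p "-x"] by auto

lemma float_zero: "is_float p 0"
  unfolding is_float_def by (rule exI[of _ 0], rule exI[of _ 0]) simp

lemma float_grid:
  assumes g: "is_float p g" and b: "2 powr real_of_int k * 2^(p-1) \<le> \<bar>g\<bar>" and p: "p \<ge> 1"
  shows "\<exists>m::int. g = real_of_int m * 2 powr real_of_int k"
proof -
  obtain M e where h: "g = real_of_int M * 2 powr real_of_int e" "\<bar>M\<bar> < 2 ^ p"
    using g unfolding is_float_def by blast
  have Mr: "\<bar>real_of_int M\<bar> < 2 ^ p"
  proof -
    have "real_of_int \<bar>M\<bar> < real_of_int (2 ^ p)" using h(2) by linarith
    then show ?thesis by simp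
  qed
  have ek: "k \<le> e"
  proof (rule ccontr)
    assume "\<not> k \<le> e"
    then have "e + 1 \<le> k" by simp
    then have "2 powr real_of_int k = 2 powr real_of_int e * 2 ^ nat (k - e)" "nat (k - e) \<ge> 1"
      using powr_int_split[of e k] by auto
    moreover have "(2::real) ^ nat (k - e) \<ge> 2 ^ 1"
      using \<open>nat (k - e) \<ge> 1\<close> by (intro power_increasing) auto
    ultimately have "2 powr real_of_int k \<ge> 2 powr real_of_int e * 2"
      by (simp add: mult_left_mono)
    then have "2 powr real_of_int k * 2^(p-1) \<ge> 2 powr real_of_int e * (2 * 2^(p-1))"
      by (simp add: mult.assoc mult_right_mono)
    also have "2 * (2::real)^(p-1) = 2^p" using pow_pred[OF p, where 'a=real] by simp
    finally have "2 powr real_of_int e * 2^p \<le> \<bar>g\<bar>" using b by linarith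
    moreover have "\<bar>g\<bar> = \<bar>real_of_int M\<bar> * 2 powr real_of_int e" by (simp add: h abs_mult)
    moreover have "\<bar>real_of_int M\<bar> * 2 powr real_of_int e < 2^p * 2 powr real_of_int e"
      using Mr by (intro mult_strict_right_mono) auto
    ultimately show False by (simp add: mult.commute)
  qed
  have "g = real_of_int (M * 2 ^ nat (e - k)) * 2 powr real_of_int k"
    using h(1) powr_int_split[OF ek] by simp
  then show ?thesis by blast
qed

lemma grid_float:
  assumes m: "\<bar>m\<bar> \<le> 2 ^ p" and p: "p \<ge> 1"
  shows "is_float p (real_of_int m * 2 powr real_of_int k)"
proof (cases "\<bar>m\<bar> < 2 ^ p")
  case True then show ?thesis unfolding is_float_def by blast
next
  case False
  then have ma: "\<bar>m\<bar> = 2 ^ p" using m by simp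
  define m' :: int where "m' = (if m > 0 then 2 ^ (p-1) else - (2 ^ (p-1)))"
  have pp: "(2::int) ^ p = 2 * 2 ^ (p-1)" using pow_pred[OF p] by simp
  have mm: "m = 2 * m'" using ma pp unfolding m'_def by (auto simp: abs_if split: if_splits)
  have "real_of_int m * 2 powr real_of_int k = real_of_int m' * 2 powr real_of_int (k + 1)"
    by (simp add: mm powr_add)
  moreover have "\<bar>m'\<bar> < 2 ^ p" using pp unfolding m'_def by auto
  ultimately show ?thesis unfolding is_float_def by blast
qed

lemma norm_le:
  assumes "2^(p-1) \<le> \<bar>m\<bar>" "\<bar>M\<bar> < 2^p" "p \<ge> 1"
    and eq: "real_of_int M * 2 powr real_of_int e = real_of_int m * 2 powr real_of_int k"
  shows "k \<le> e"
proof (rule ccontr)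
  assume "\<not> k \<le> e"
  then have ek: "e \<le> k" "nat (k - e) \<ge> 1" by auto
  have "real_of_int M * 2 powr real_of_int e = (real_of_int m * 2 ^ nat (k - e)) * 2 powr real_of_int e"
    using eq powr_int_split[OF ek(1)] by simp
  then have "real_of_int M = real_of_int m * 2 ^ nat (k - e)" by simp
  then have "real_of_int M = real_of_int (m * 2 ^ nat (k - e))" by simp
  then have "M = m * 2 ^ nat (k - e)" by (simp only: of_int_eq_iff)
  then have "\<bar>M\<bar> = \<bar>m\<bar> * 2 ^ nat (k - e)" by (simp add: abs_mult)
  moreover have "(2::int) ^ nat (k - e) \<ge> 2 ^ 1" using ek(2) by (intro power_increasing) auto
  moreover have "2^(p-1) * 2 \<le> \<bar>m\<bar> * (2::int) ^ nat (k - e)"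
    using assms(1) \<open>(2::int) ^ nat (k - e) \<ge> 2 ^ 1\<close> by (intro mult_mono) auto
  ultimately have "\<bar>M\<bar> \<ge> 2^(p-1) * 2" by linarith
  moreover have "(2::int)^(p-1) * 2 = 2^p" using pow_pred[OF assms(3), where 'a=int] by simp
  ultimately show False using assms(2) by linarith
qed

lemma norm_unique:
  assumes "2^(p-1) \<le> \<bar>M\<bar>" "\<bar>M\<bar> < 2^p" "2^(p-1) \<le> \<bar>m\<bar>" "\<bar>m\<bar> < 2^p" "p \<ge> 1"
    and eq: "real_of_int M * 2 powr real_of_int e = real_of_int m * 2 powr real_of_int k"
  shows "e = k \<and> M = m"
proof -
  have "k \<le> e" using norm_le[of p m M e k] assms by auto
  moreover have "e \<le> k" using norm_le[of p M m k e] assms by auto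
  ultimately have "e = k" by simp
  then show ?thesis using eq by simp
qed

lemma even_char:
  assumes "2^(p-1) \<le> \<bar>m\<bar>" "\<bar>m\<bar> < 2^p" "p \<ge> 1"
  shows "even_float p (real_of_int m * 2 powr real_of_int k) \<longleftrightarrow> even m"
proof
  assume "even m" then show "even_float p (real_of_int m * 2 powr real_of_int k)"
    unfolding even_float_def using assms by blast
next
  assume a: "even_float p (real_of_int m * 2 powr real_of_int k)"
  have "m \<noteq> 0" using assms(1) by auto
  then have "real_of_int m * 2 powr real_of_int k \<noteq> 0" by simp
  then obtain M e where h: "real_of_int m * 2 powr real_of_int k = real_of_int M * 2 powr real_of_int e"
    "2 ^ (p - 1) \<le> \<bar>M\<bar>" "\<bar>M\<bar> < 2 ^ p" "even M"
    using a unfolding even_float_def by blast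
  have "e = k \<and> M = m" using norm_unique[of p M m e k] h assms by auto
  then show "even m" using h by simp
qed

lemma even_top:
  assumes "p \<ge> 2"
  shows "even_float p ((2::real) ^ p * 2 powr real_of_int k)"
proof -
  have pp: "(2::real) ^ p = 2 * 2 ^ (p-1)" using assms pow_pred[of p] by simp
  have "(2::real) ^ p * 2 powr real_of_int k = real_of_int ((2::int) ^ (p-1)) * 2 powr real_of_int (k + 1)"
    by (simp add: pp powr_add)
  moreover have "even ((2::int) ^ (p-1))" using assms by simp
  moreover have "\<bar>(2::int) ^ (p-1)\<bar> < 2 ^ p" using assms by simp
  ultimately show ?thesis unfolding even_float_def
    by (intro disjI2 exI[of _ "(2::int)^(p-1)"] exI[of _ "k+1"] conjI) auto
qed

lemma exp_exists:
  assumes v: "v > 0" and p: "p \<ge> 1"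
  shows "\<exists>k::int. 2 powr real_of_int k * 2^(p-1) \<le> v \<and> v < 2 powr real_of_int k * 2^p"
proof -
  define j where "j = \<lfloor>log 2 v\<rfloor>"
  define k where "k = j - int (p - 1)"
  have a: "2 powr real_of_int j \<le> v"
  proof -
    have "2 powr real_of_int j \<le> 2 powr (log 2 v)" unfolding j_def by (intro powr_mono) auto
    then show ?thesis using v by simp
  qed
  have b: "v < 2 powr real_of_int (j + 1)"
  proof -
    have "2 powr (log 2 v) < 2 powr real_of_int (j + 1)" unfolding j_def
      by (intro powr_less_mono) linarith+
    then show ?thesis using v by simp
  qed
  have c: "2 powr real_of_int k * 2^(p-1) = 2 powr real_of_int j"
  proof -
    have "2 powr real_of_int j = 2 powr real_of_int k * 2 powr real (p - 1)"
      by (simp add: k_def powr_add[symmetric])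
    then show ?thesis by (simp add: powr_realpow)
  qed
  have d: "2 powr real_of_int k * 2^p = 2 powr real_of_int (j + 1)"
  proof -
    have "2 powr real_of_int (j+1) = 2 powr real_of_int k * 2 powr real p"
      using p by (simp add: k_def powr_add[symmetric] of_nat_diff)
    then show ?thesis by (simp add: powr_realpow)
  qed
  show ?thesis using a b c d by (intro exI[of _ k]) simp
qed


lemma RN_pos_aux:
  assumes p: "p \<ge> 2" and v: "v > 0" and w: "w = 2 powr real_of_int k"
    and lb: "w * 2^(p-1) \<le> v" and ub: "v < w * 2^p"
  shows "\<exists>f. nearP (is_float p) (even_float p) v f \<and> (\<forall>f'. nearP (is_float p) (even_float p) v f' \<longrightarrow> f' = f)
           \<and> (\<exists>m::int. f = real_of_int m * w) \<and> \<bar>f - v\<bar> \<le> w/2"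
proof (cases "is_float p v")
  case True
  have p1: "p \<ge> 1" using p by simp
  have "2 powr real_of_int k * 2^(p-1) \<le> \<bar>v\<bar>" using lb v w by simp
  then obtain m where "v = real_of_int m * w" using float_grid[OF True _ p1] w by blast
  moreover have "w > 0" using w by simp
  ultimately show ?thesis using nearP_self[of "is_float p" v "even_float p", OF True] by (intro exI[of _ v]) auto
next
  case nf: False
  have p1: "p \<ge> 1" using p by simp
  have wpos: "w > 0" using w by simp
  define n where "n = \<lfloor>v / w\<rfloor>"
  have n1: "real_of_int n \<le> v / w" "v / w < real_of_int n + 1" unfolding n_def by linarith+
  have vw1: "2^(p-1) \<le> v / w" using lb wpos by (simp add: field_simps)
  have vw2: "v / w < 2^p" using ub wpos by (simp add: field_simps)
  have nlo: "2^(p-1) \<le> n"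
  proof -
    have "real_of_int (2^(p-1)) \<le> v / w" using vw1 by simp
    then show ?thesis unfolding n_def by (simp only: le_floor_iff)
  qed
  have nhi: "n < 2^p"
  proof -
    have "v / w < real_of_int (2^p)" using vw2 by simp
    then show ?thesis unfolding n_def by (simp only: floor_less_iff)
  qed
  define lo where "lo = real_of_int n * w"
  define hi where "hi = real_of_int (n + 1) * w"
  have lov: "lo \<le> v" using n1(1) wpos unfolding lo_def by (simp add: field_simps)
  have vhi: "v < hi" using n1(2) wpos unfolding hi_def by (simp add: field_simps)
  have "(0::int) \<le> 2^(p-1)" by simp
  then have n0: "0 \<le> n" using nlo by linarith
  have Flo: "is_float p lo" unfolding lo_def w using grid_float[of n p k] n0 nhi p1 by auto
  have Fhi: "is_float p hi" unfolding hi_def w using grid_float[of "n+1" p k] n0 nhi p1 by auto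
  have lv: "lo < v" using lov Flo nf by (cases "lo = v") auto
  have lo_ge: "w * 2^(p-1) \<le> lo"
  proof -
    have "real_of_int (2^(p-1)) \<le> real_of_int n" using nlo by (simp only: of_int_le_iff)
    then have "2^(p-1) \<le> real_of_int n" by simp
    then show ?thesis unfolding lo_def using wpos by (simp add: mult.commute mult_right_mono)
  qed
  have gap: "\<And>g. is_float p g \<Longrightarrow> g \<le> lo \<or> g \<ge> hi"
  proof (rule ccontr)
    fix g assume g: "is_float p g" and "\<not> (g \<le> lo \<or> g \<ge> hi)"
    then have gl: "lo < g" "g < hi" by auto
    have "2 powr real_of_int k * 2^(p-1) \<le> \<bar>g\<bar>" using gl lo_ge w by auto
    then obtain m where gm: "g = real_of_int m * w" using float_grid[OF g _ p1] w by blast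
    have "real_of_int n < real_of_int m" using gl(1) wpos unfolding gm lo_def by simp
    moreover have "real_of_int m < real_of_int (n + 1)" using gl(2) wpos unfolding gm hi_def by simp
    ultimately have "n < m" "m < n + 1" by (simp only: of_int_less_iff)+
    then show False by simp
  qed
  have E: "\<not> (even_float p lo \<and> even_float p hi) \<and> (even_float p lo \<or> even_float p hi)"
  proof (cases "n + 1 = 2^p")
    case True
    have "\<not> even_float p lo"
    proof -
      have "even (n + 1)" unfolding True using p by simp
      then have "odd n" by simp
      moreover have "\<bar>n\<bar> < 2^p" "2^(p-1) \<le> \<bar>n\<bar>" using nlo nhi n0 by auto
      ultimately show ?thesis unfolding lo_def w using even_char[of p n k] p1 by auto
    qed
    moreover have "even_float p hi"
    proof -
      have "hi = 2^p * 2 powr real_of_int k" unfolding hi_def w True by simp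
      then show ?thesis using even_top[OF p] by simp
    qed
    ultimately show ?thesis by blast
  next
    case False
    then have n2: "n + 1 < 2^p" using nhi by simp
    have el: "even_float p lo \<longleftrightarrow> even n" unfolding lo_def w using even_char[of p n k] nlo nhi n0 p1 by auto
    have eh: "even_float p hi \<longleftrightarrow> even (n+1)" unfolding hi_def w using even_char[of p "n+1" k] nlo n2 n0 p1 by auto
    show ?thesis unfolding el eh by auto
  qed
  obtain f where f: "f = lo \<or> f = hi" "\<bar>f - v\<bar> \<le> (hi - lo)/2" "nearP (is_float p) (even_float p) v f"
      "\<forall>f'. nearP (is_float p) (even_float p) v f' \<longrightarrow> f' = f"
    using two_nb[OF lv vhi Flo Fhi gap] E by blast
  have "hi - lo = w" unfolding hi_def lo_def by (simp add: algebra_simps)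
  then have fw: "\<bar>f - v\<bar> \<le> w/2" using f(2) by simp
  have fm: "\<exists>m::int. f = real_of_int m * w" using f(1) unfolding lo_def hi_def by blast
  show ?thesis using f(3) f(4) fm fw by blast
qed

lemma all_neg: "(\<forall>g. is_float p g \<longrightarrow> P (-g)) \<longleftrightarrow> (\<forall>g. is_float p g \<longrightarrow> P g)"
  by (metis float_neg minus_minus)

lemma abs_nn: "\<bar>-a - b\<bar> = \<bar>(a::real) - -b\<bar>" "\<bar>-a - -b\<bar> = \<bar>(a::real) - b\<bar>"
  by (cases "a + b \<ge> 0"; simp) (cases "a - b \<ge> 0"; simp)

lemma nearP_neg:
  "nearP (is_float p) (even_float p) (-v) (-f) \<longleftrightarrow> nearP (is_float p) (even_float p) v f"
proof -
  have a: "(\<forall>g. is_float p g \<longrightarrow> \<bar>-v - -f\<bar> \<le> \<bar>-v - g\<bar>) \<longleftrightarrow> (\<forall>g. is_float p g \<longrightarrow> \<bar>v - f\<bar> \<le> \<bar>v - g\<bar>)"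
    unfolding abs_nn(2) unfolding abs_nn(1) by (rule all_neg)
  have b: "(\<forall>g. is_float p g \<and> \<bar>-v - g\<bar> = \<bar>-v - -f\<bar> \<longrightarrow> g = -f) \<longleftrightarrow> (\<forall>g. is_float p g \<and> \<bar>v - g\<bar> = \<bar>v - f\<bar> \<longrightarrow> g = f)"
  proof -
    have e: "\<And>g. (g = -f) \<longleftrightarrow> (-g = f)" by auto
    have "(\<forall>g. is_float p g \<and> \<bar>-v - g\<bar> = \<bar>-v - -f\<bar> \<longrightarrow> g = -f) \<longleftrightarrow> (\<forall>g. is_float p g \<longrightarrow> (\<bar>v - (-g)\<bar> = \<bar>v - f\<bar> \<longrightarrow> -g = f))"
      unfolding abs_nn(2) unfolding abs_nn(1) e by blast
    also have "\<dots> \<longleftrightarrow> (\<forall>g. is_float p g \<longrightarrow> (\<bar>v - g\<bar> = \<bar>v - f\<bar> \<longrightarrow> g = f))" by (rule all_neg)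
    finally show ?thesis by blast
  qed
  show ?thesis unfolding nearP_def a b float_neg even_float_neg by simp
qed

lemma RN_ex1:
  assumes p: "p \<ge> 2"
  shows "\<exists>!f. nearP (is_float p) (even_float p) v f"
proof -
  have pos: "\<And>v. v > 0 \<Longrightarrow> \<exists>f. nearP (is_float p) (even_float p) v f \<and> (\<forall>f'. nearP (is_float p) (even_float p) v f' \<longrightarrow> f' = f)"
  proof -
    fix v :: real assume v: "v > 0"
    obtain k where k: "2 powr real_of_int k * 2^(p-1) \<le> v" "v < 2 powr real_of_int k * 2^p"
      using exp_exists[OF v, of p] p by auto
    show "?thesis v" using RN_pos_aux[OF p v refl k] by blast
  qed
  have "\<exists>f. nearP (is_float p) (even_float p) v f \<and> (\<forall>f'. nearP (is_float p) (even_float p) v f' \<longrightarrow> f' = f)"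
  proof (cases "v > 0")
    case True then show ?thesis using pos by blast
  next
    case False
    show ?thesis
    proof (cases "v = 0")
      case True then show ?thesis using nearP_self[of "is_float p" 0 "even_float p", OF float_zero] by blast
    next
      case False
      then have "-v > 0" using \<open>\<not> v > 0\<close> by simp
      then obtain f where f: "nearP (is_float p) (even_float p) (-v) f" "\<forall>f'. nearP (is_float p) (even_float p) (-v) f' \<longrightarrow> f' = f"
        using pos by blast
      have "nearP (is_float p) (even_float p) v (-f)" using f(1) nearP_neg[of p v "-f"] by simp
      moreover have "\<forall>f'. nearP (is_float p) (even_float p) v f' \<longrightarrow> f' = -f"
      proof (intro allI impI)
        fix f' assume "nearP (is_float p) (even_float p) v f'"
        then have "nearP (is_float p) (even_float p) (-v) (-f')" using nearP_neg[of p v f'] by simp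
        then have "-f' = f" using f(2) by blast
        then show "f' = -f" by simp
      qed
      ultimately show ?thesis by blast
    qed
  qed
  then show ?thesis by blast
qed

lemma RN_prop: "p \<ge> 2 \<Longrightarrow> nearP (is_float p) (even_float p) v (RN p v)"
  unfolding RN_alt by (rule theI', rule RN_ex1)

lemma RN_eq: "p \<ge> 2 \<Longrightarrow> nearP (is_float p) (even_float p) v f \<Longrightarrow> RN p v = f"
  unfolding RN_alt by (rule the1_equality[OF RN_ex1])

lemma RN_float: "p \<ge> 2 \<Longrightarrow> is_float p (RN p v)"
  using RN_prop unfolding nearP_def by blast

lemma RN_id: "p \<ge> 2 \<Longrightarrow> is_float p v \<Longrightarrow> RN p v = v"
  using RN_eq nearP_self by blast

lemma RN_neg: "p \<ge> 2 \<Longrightarrow> RN p (-v) = - RN p v"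
  using RN_eq[of p "-v" "- RN p v"] RN_prop[of p v] nearP_neg by blast

lemma RN_grid_pos:
  assumes p: "p \<ge> 2" and v: "v > 0" and w: "w = 2 powr real_of_int k"
    and lb: "w * 2^(p-1) \<le> v" and ub: "v < w * 2^p"
  shows "(\<exists>m::int. RN p v = real_of_int m * w) \<and> \<bar>RN p v - v\<bar> \<le> w/2"
proof -
  obtain f where f: "nearP (is_float p) (even_float p) v f" "(\<exists>m::int. f = real_of_int m * w)" "\<bar>f - v\<bar> \<le> w/2"
    using RN_pos_aux[OF assms] by blast
  then show ?thesis using RN_eq[OF p f(1)] by simp
qed


lemma RN_err_pos:
  assumes p: "p \<ge> 2" and v: "v > 0"
  shows "\<bar>RN p v - v\<bar> * (2^p + 1) \<le> v"
proof -
  have p1: "p \<ge> 1" using p by simp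
  obtain k where k: "2 powr real_of_int k * 2^(p-1) \<le> v" "v < 2 powr real_of_int k * 2^p"
    using exp_exists[OF v p1] by blast
  define w where "w = 2 powr real_of_int k"
  have wpos: "w > 0" unfolding w_def by simp
  obtain m where m: "RN p v = real_of_int m * w" and d: "\<bar>RN p v - v\<bar> \<le> w/2"
    using RN_grid_pos[OF p v w_def] k unfolding w_def by blast
  define W :: real where "W = 2^(p-1)"
  have W2: "(2::real)^p = 2 * W" unfolding W_def using pow_pred[OF p1, where 'a=real] by simp
  have lb: "w * W \<le> v" using k unfolding w_def W_def by simp
  define f where "f = RN p v"
  show ?thesis
  proof (cases "f \<le> v")
    case True
    have "real_of_int m * w \<ge> v - w/2" using d m True unfolding f_def by linarith
    then have "real_of_int m * w > (W - 1) * w" using lb wpos by (simp add: algebra_simps)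
    then have "real_of_int m > W - 1" using wpos by simp
    then have "real_of_int m > real_of_int (2^(p-1) - 1)" unfolding W_def by simp
    then have "m > 2^(p-1) - 1" by (simp only: of_int_less_iff)
    then have "m \<ge> 2^(p-1)" by simp
    then have "real_of_int m \<ge> W" unfolding W_def
      by (metis of_int_le_iff of_int_numeral of_int_power)
    then have fw: "f \<ge> W * w" using wpos m unfolding f_def by (simp add: mult_right_mono)
    have "\<bar>f - v\<bar> = v - f" using True by simp
    moreover have "\<bar>f - v\<bar> * (2 * W) \<le> (w/2) * (2 * W)" using d unfolding f_def W_def
      by (intro mult_right_mono) auto
    ultimately show ?thesis using fw W2 unfolding f_def by (simp add: algebra_simps)
  next
    case False
    have "W * w = w * W" by simp
    then have "real_of_int m * w > W * w" using lb m False unfolding f_def by linarith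
    then have "real_of_int m > W" using wpos by simp
    then have "real_of_int m > real_of_int (2^(p-1))" unfolding W_def by simp
    then have "m > 2^(p-1)" by (simp only: of_int_less_iff)
    then have "m \<ge> 2^(p-1) + 1" by simp
    then have "real_of_int m \<ge> real_of_int (2^(p-1) + 1)" by (simp only: of_int_le_iff)
    then have "real_of_int m \<ge> W + 1" unfolding W_def by simp
    then have fw: "f \<ge> (W + 1) * w" using wpos m unfolding f_def by (simp add: mult_right_mono)
    have "\<bar>f - v\<bar> = f - v" using False by simp
    moreover have "\<bar>f - v\<bar> * (2 * W + 2) \<le> (w/2) * (2 * W + 2)" using d unfolding f_def W_def
      by (intro mult_right_mono) auto
    ultimately show ?thesis using fw W2 unfolding f_def by (simp add: algebra_simps)
  qed
qed

lemma RN_err: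
  assumes p: "p \<ge> 2"
  shows "\<bar>RN p v - v\<bar> \<le> \<bar>v\<bar> / (2^p + 1)"
proof -
  have pos: "\<And>v. v > 0 \<Longrightarrow> \<bar>RN p v - v\<bar> \<le> \<bar>v\<bar> / (2^p + 1)"
  proof -
    fix v :: real assume v: "v > 0"
    have "(0::real) < 2^p + 1" by (simp add: add_pos_pos)
    then show "\<bar>RN p v - v\<bar> \<le> \<bar>v\<bar> / (2^p + 1)" using RN_err_pos[OF p v] v
      by (simp add: le_divide_eq)
  qed
  consider "v > 0" | "v = 0" | "v < 0" by linarith
  then show ?thesis
  proof cases
    case 1 then show ?thesis using pos by blast
  next
    case 2 then show ?thesis using RN_id[OF p float_zero] by simp
  next
    case 3
    have h: "\<bar>RN p (-v) - (-v)\<bar> \<le> \<bar>-v\<bar> / (2^p + 1)" using pos[of "-v"] 3 by linarith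
    have "RN p (-v) - (-v) = -(RN p v - v)" using RN_neg[OF p, of v] by simp
    then have "\<bar>RN p (-v) - (-v)\<bar> = \<bar>RN p v - v\<bar>" by (simp only: abs_minus_cancel)
    then show ?thesis using h by simp
  qed
qed

lemma RN_err_u:
  assumes p: "p \<ge> 2"
  shows "\<bar>RN p v - v\<bar> \<le> (1 / 2^p) * \<bar>v\<bar>"
proof -
  have a: "(0::real) < 2^p" by simp
  have b: "(0::real) < 2^p + 1" using a by linarith
  have "\<bar>v\<bar> / (2^p + 1) \<le> \<bar>v\<bar> / 2^p" using a b by (intro divide_left_mono) (auto intro: mult_pos_pos)
  then show ?thesis using RN_err[OF p, of v] by simp
qed

lemma sqrt_exact:
  assumes p: "p \<ge> 2" and F: "is_float p sg" and sg: "sg > 0"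
  shows "is_float p (sg - (RN p (sqrt sg))^2)"
proof -
  have p1: "p \<ge> 1" using p by simp
  define r where "r = sqrt sg"
  have r: "r > 0" "r^2 = sg" using sg unfolding r_def by auto
  obtain k where k: "2 powr real_of_int k * 2^(p-1) \<le> r" "r < 2 powr real_of_int k * 2^p"
    using exp_exists[OF r(1) p1] by blast
  define w where "w = 2 powr real_of_int k"
  have wpos: "w > 0" unfolding w_def by simp
  obtain m where m: "RN p r = real_of_int m * w" and d: "\<bar>RN p r - r\<bar> \<le> w/2"
    using RN_grid_pos[OF p r(1) w_def] k unfolding w_def by blast
  define s where "s = RN p r"
  define W :: real where "W = 2^(p-1)"
  have W2: "(2::real)^p = 2 * W" unfolding W_def using pow_pred[OF p1, where 'a=real] by simp
  have w2: "2 powr real_of_int (2*k) = w^2" unfolding w_def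
    by (simp add: power2_eq_square powr_add[symmetric])
  have kk: "2 powr real_of_int (2*k + int (p-1)) = w^2 * W"
  proof -
    have "2 powr real_of_int (2*k + int (p-1)) = 2 powr real_of_int (2*k) * 2 powr real (p-1)"
      by (simp add: powr_add[symmetric])
    then show ?thesis using w2 unfolding W_def by (simp add: powr_realpow)
  qed
  have "2 powr real_of_int (2*k + int (p-1)) * 2^(p-1) \<le> \<bar>sg\<bar>"
  proof -
    have "w * W \<le> r" using k unfolding w_def W_def by simp
    moreover have "0 \<le> w * W" using wpos unfolding W_def by simp
    ultimately have "(w * W)^2 \<le> r^2" by (intro power_mono) auto
    then show ?thesis using kk r sg unfolding W_def by (simp add: power2_eq_square algebra_simps)
  qed
  then obtain M where M: "sg = real_of_int M * 2 powr real_of_int (2*k + int (p-1))"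
    using float_grid[OF F _ p1] by blast
  define N where "N = M * 2^(p-1) - m^2"
  have Neq: "sg - s^2 = real_of_int N * w^2"
    unfolding N_def s_def using M kk m unfolding W_def by (simp add: power2_eq_square algebra_simps)
  have "\<bar>sg - s^2\<bar> = \<bar>r - s\<bar> * \<bar>r + s\<bar>"
    using r(2) by (simp add: power2_eq_square algebra_simps abs_mult[symmetric])
  also have "\<dots> \<le> (w/2) * (2*r + w/2)"
  proof (rule mult_mono)
    show "\<bar>r - s\<bar> \<le> w/2" using d unfolding s_def by (simp add: abs_minus_commute)
    show "\<bar>r + s\<bar> \<le> 2*r + w/2" using d[unfolded abs_le_iff] r(1) unfolding s_def abs_le_iff by linarith
  qed (use wpos in auto)
  also have "\<dots> < (w/2) * (2*(w * (2*W)) + w/2)"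
  proof -
    have rb: "r < w*(2*W)" using k(2) W2 unfolding w_def by simp
    show ?thesis using rb wpos by (intro mult_strict_left_mono) (auto simp: algebra_simps)
  qed
  also have "\<dots> = w^2 * (2*W + 1/4)" by (simp add: power2_eq_square algebra_simps)
  finally have "\<bar>real_of_int N\<bar> * w^2 < (2*W + 1/4) * w^2" using Neq by (simp add: abs_mult mult.commute)
  then have "\<bar>real_of_int N\<bar> < 2*W + 1/4" using wpos by simp
  then have "real_of_int \<bar>N\<bar> < real_of_int (2^p + 1)" using W2 by simp
  then have "\<bar>N\<bar> < 2^p + 1" by (simp only: of_int_less_iff)
  then have "\<bar>N\<bar> \<le> 2^p" by simp
  then have "is_float p (real_of_int N * 2 powr real_of_int (2*k))" using grid_float p1 by blast
  then show ?thesis using Neq w2 unfolding s_def r_def by simp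
qed



lemma sc:
  fixes X Y Z D q :: real
  assumes "\<bar>X - Y\<bar> \<le> q * \<bar>Z\<bar>" "D > 0"
  shows "\<bar>X/D - Y/D\<bar> \<le> q * \<bar>Z/D\<bar>"
proof -
  have "\<bar>X/D - Y/D\<bar> = \<bar>X - Y\<bar> / D" using assms(2) by (simp add: diff_divide_distrib[symmetric] abs_divide)
  also have "\<dots> \<le> (q * \<bar>Z\<bar>) / D" using assms by (intro divide_right_mono) auto
  also have "\<dots> = q * \<bar>Z/D\<bar>" using assms(2) by (simp add: abs_divide)
  finally show ?thesis .
qed

lemma abs_gen:
  fixes u a b sxh syh sh s t1 t2 t c rho :: real
  assumes u0: "0 < u" and u1: "u \<le> 1/16" and S: "S = a*a + b*b" and Spos: "S > 0"
    and hx: "\<bar>sxh - a*a\<bar> \<le> u * \<bar>a*a\<bar>" and hy: "\<bar>syh - b*b\<bar> \<le> u * \<bar>b*b\<bar>"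
    and hsh: "\<bar>sh - (sxh + syh)\<bar> \<le> u * \<bar>sxh + syh\<bar>"
    and hs: "\<bar>s - sqrt sh\<bar> \<le> u * \<bar>sqrt sh\<bar>"
    and ht1: "\<bar>t1 - (a*a - sxh + (b*b - syh))\<bar> \<le> u * \<bar>a*a - sxh + (b*b - syh)\<bar>"
    and ht2: "\<bar>t2 - (sh - s^2 + (sxh + syh - sh))\<bar> \<le> u * \<bar>sh - s^2 + (sxh + syh - sh)\<bar>"
    and ht: "\<bar>t - (t1 + t2)\<bar> \<le> u * \<bar>t1 + t2\<bar>"
    and hc: "\<bar>c - t / s\<bar> \<le> u * \<bar>t / s\<bar>"
    and hr: "\<bar>rho - (c/2 + s)\<bar> \<le> u / (1 + u) * \<bar>c/2 + s\<bar>"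
  shows "\<bar>rho / sqrt S - 1\<bar> \<le> u + 7 * u^2 + 100 * u^3"
proof -
  define H where "H = sqrt S"
  have Hpos: "H > 0" using Spos unfolding H_def by simp
  have HH: "H * H = S" using Spos unfolding H_def by simp
  have A0: "a*a/S \<ge> 0" "b*b/S \<ge> 0" using Spos by (auto intro!: divide_nonneg_pos)
  have AB: "a*a/S + b*b/S = 1"
  proof -
    have "a*a/S + b*b/S = (a*a + b*b)/S" by (simp add: add_divide_distrib)
    also have "\<dots> = S/S" using S by simp
    also have "\<dots> = 1" using Spos by simp
    finally show ?thesis .
  qed
  have hx': "\<bar>sxh/S - a*a/S\<bar> \<le> u * (a*a/S)" using sc[OF hx Spos] A0 Spos by simp
  have hy': "\<bar>syh/S - b*b/S\<bar> \<le> u * (b*b/S)" using sc[OF hy Spos] A0 Spos by simp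
  have hsh': "\<bar>sh/S - (sxh/S + syh/S)\<bar> \<le> u * \<bar>sxh/S + syh/S\<bar>"
    using sc[OF hsh Spos] by (simp add: add_divide_distrib)
  have sq: "sqrt (sh/S) = sqrt sh / H" unfolding H_def by (simp add: real_sqrt_divide)
  have hs': "\<bar>s/H - sqrt (sh/S)\<bar> \<le> u * \<bar>sqrt (sh/S)\<bar>"
    using sc[OF hs Hpos] unfolding sq .
  have ht1': "\<bar>t1/S - (a*a/S - sxh/S + (b*b/S - syh/S))\<bar> \<le> u * \<bar>a*a/S - sxh/S + (b*b/S - syh/S)\<bar>"
    using sc[OF ht1 Spos] by (simp add: add_divide_distrib diff_divide_distrib)
  have s2: "(s/H)^2 = s^2/S" using HH by (simp add: power2_eq_square)
  have ht2': "\<bar>t2/S - (sh/S - (s/H)^2 + (sxh/S + syh/S - sh/S))\<bar> \<le> u * \<bar>sh/S - (s/H)^2 + (sxh/S + syh/S - sh/S)\<bar>"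
    using sc[OF ht2 Spos] unfolding s2 by (simp add: add_divide_distrib diff_divide_distrib)
  have ht': "\<bar>t/S - (t1/S + t2/S)\<bar> \<le> u * \<bar>t1/S + t2/S\<bar>"
    using sc[OF ht Spos] by (simp add: add_divide_distrib)
  have ts: "(t/S) / (s/H) = (t/s)/H"
  proof (cases "s = 0")
    case True then show ?thesis by simp
  next
    case False then show ?thesis unfolding HH[symmetric] using Hpos by (simp add: field_simps)
  qed
  have hc': "\<bar>c/H - (t/S)/(s/H)\<bar> \<le> u * \<bar>(t/S)/(s/H)\<bar>"
    using sc[OF hc Hpos] unfolding ts .
  have cs: "(c/H)/2 + s/H = (c/2 + s)/H" by (simp add: add_divide_distrib)
  have hr': "\<bar>rho/H - ((c/H)/2 + s/H)\<bar> \<le> u / (1 + u) * \<bar>(c/H)/2 + s/H\<bar>"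
    using sc[OF hr Hpos] unfolding cs .
  have "\<bar>rho/H - 1\<bar> \<le> u + 7 * u^2 + 100 * u^3"
    by (rule abs_norm[OF u0 u1 A0 AB hx' hy' hsh' hs' ht1' ht2' ht' hc' hr'])
  then show ?thesis unfolding H_def .
qed


definition core :: "nat \<Rightarrow> real \<Rightarrow> real \<Rightarrow> real" where
  "core p x y =
    (let (sxh, sxl) = Fast2Mult p x x;
         (syh, syl) = Fast2Mult p y y;
         (\<sigma>h, \<sigma>l) = Fast2Sum p sxh syh;
         s = RN p (sqrt \<sigma>h);
         \<delta>s = RN p (\<sigma>h - s^2);
         \<tau>1 = RN p (sxl + syl);
         \<tau>2 = RN p (\<delta>s + \<sigma>l);
         \<tau> = RN p (\<tau>1 + \<tau>2);
         c = RN p (\<tau> / s)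
     in RN p (c / 2 + s))"

lemma hypot4_core: "hypot4 p x0 y0 = (if \<bar>x0\<bar> < \<bar>y0\<bar> then core p y0 x0 else core p x0 y0)"
  by (simp add: hypot4_def core_def)

lemma core_bound:
  fixes a b :: real
  assumes p: "p \<ge> 4" and ab: "a \<noteq> 0 \<or> b \<noteq> 0"
  shows "\<bar>core p a b / sqrt (a*a + b*b) - 1\<bar> \<le> (1/2^p) + 7 * (1/2^p)^2 + 100 * (1/2^p)^3"
proof -
  define u :: real where "u = 1/2^p"
  have p2: "p \<ge> 2" using p by simp
  have u0: "u > 0" unfolding u_def by simp
  have "(2::real)^4 \<le> 2^p" using p by (intro power_increasing) auto
  then have u1: "u \<le> 1/16" unfolding u_def by (simp add: divide_simps)
  have err: "\<And>v. \<bar>RN p v - v\<bar> \<le> u * \<bar>v\<bar>" using RN_err_u[OF p2] unfolding u_def by blast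
  have err2: "\<And>v. \<bar>RN p v - v\<bar> \<le> u / (1 + u) * \<bar>v\<bar>"
  proof -
    fix v
    have "u / (1 + u) = 1 / (2^p + 1)" unfolding u_def by (simp add: field_simps)
    then show "\<bar>RN p v - v\<bar> \<le> u / (1 + u) * \<bar>v\<bar>" using RN_err[OF p2, of v] by simp
  qed
  define S where "S = a*a + b*b"
  have Spos: "S > 0" using ab unfolding S_def by (simp add: sum_squares_gt_zero_iff)
  define sxh where "sxh = RN p (a*a)"
  define syh where "syh = RN p (b*b)"
  define sh where "sh = RN p (sxh + syh)"
  define s where "s = RN p (sqrt sh)"
  define ds where "ds = RN p (sh - s^2)"
  define t1 where "t1 = RN p ((a*a - sxh) + (b*b - syh))"
  define t2 where "t2 = RN p (ds + (sxh + syh - sh))"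
  define t where "t = RN p (t1 + t2)"
  define c where "c = RN p (t / s)"
  define rho where "rho = RN p (c/2 + s)"
  have core: "core p a b = rho"
    unfolding core_def Fast2Mult_def Fast2Sum_def Let_def prod.case
    unfolding rho_def c_def t_def t1_def t2_def ds_def s_def sh_def sxh_def syh_def ..
  have hx: "\<bar>sxh - a*a\<bar> \<le> u * \<bar>a*a\<bar>" unfolding sxh_def by (rule err)
  have hy: "\<bar>syh - b*b\<bar> \<le> u * \<bar>b*b\<bar>" unfolding syh_def by (rule err)
  have hsh: "\<bar>sh - (sxh + syh)\<bar> \<le> u * \<bar>sxh + syh\<bar>" unfolding sh_def by (rule err)
  have hs: "\<bar>s - sqrt sh\<bar> \<le> u * \<bar>sqrt sh\<bar>" unfolding s_def by (rule err)
  have ht1: "\<bar>t1 - (a*a - sxh + (b*b - syh))\<bar> \<le> u * \<bar>a*a - sxh + (b*b - syh)\<bar>" unfolding t1_def by (rule err)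
  have shpos: "sh > 0"
  proof -
    have "sxh \<ge> a*a - u*(a*a)" using hx by (simp add: abs_le_iff)
    moreover have "syh \<ge> b*b - u*(b*b)" using hy by (simp add: abs_le_iff)
    ultimately have "sxh + syh \<ge> (1 - u) * S" unfolding S_def by (simp add: algebra_simps)
    moreover have "(1 - u) * S > 0" using u1 Spos by simp
    ultimately have Q: "sxh + syh > 0" by linarith
    have "sh \<ge> (sxh + syh) - u * (sxh + syh)" using hsh Q by (simp add: abs_le_iff)
    moreover have "(sxh + syh) - u * (sxh + syh) = (1 - u) * (sxh + syh)" by (simp add: algebra_simps)
    moreover have "(1 - u) * (sxh + syh) > 0" using u1 Q by simp
    ultimately show ?thesis by linarith
  qed
  have dsx: "ds = sh - s^2"
    unfolding ds_def s_def using sqrt_exact[OF p2 RN_float[OF p2] shpos[unfolded sh_def]]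
    by (simp add: RN_id[OF p2] sh_def)
  have ht2: "\<bar>t2 - (sh - s^2 + (sxh + syh - sh))\<bar> \<le> u * \<bar>sh - s^2 + (sxh + syh - sh)\<bar>"
    unfolding t2_def dsx[symmetric] by (rule err)
  have ht: "\<bar>t - (t1 + t2)\<bar> \<le> u * \<bar>t1 + t2\<bar>" unfolding t_def by (rule err)
  have hc: "\<bar>c - t / s\<bar> \<le> u * \<bar>t / s\<bar>" unfolding c_def by (rule err)
  have hr: "\<bar>rho - (c/2 + s)\<bar> \<le> u / (1 + u) * \<bar>c/2 + s\<bar>" unfolding rho_def by (rule err2)
  have "\<bar>rho / sqrt S - 1\<bar> \<le> u + 7 * u^2 + 100 * u^3"
    by (rule abs_gen[OF u0 u1 S_def Spos hx hy hsh hs ht1 ht2 ht hc hr])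
  then show ?thesis unfolding core S_def u_def .
qed


lemma fin_step:
  fixes E u k :: real
  assumes "E \<le> u + 7*u^2 + 100*u^3" "0 < u" "100*u \<le> k"
  shows "E \<le> u + (7 + k)*u^2"
proof -
  have "(100*u)*u^2 \<le> k*u^2" using assms(3) by (intro mult_right_mono) auto
  moreover have "100*u^3 = (100*u)*u^2" by (simp add: power2_eq_square power3_eq_cube)
  ultimately show ?thesis using assms(1) by (simp add: algebra_simps)
qed

lemma thr: "N \<le> p \<Longrightarrow> (1::real)/2^p \<le> 1/2^N"
  by (intro divide_left_mono power_increasing) auto

theorem theorem4:
  fixes p :: nat and x y u :: real
  assumes "p \<ge> 4" and "u = 1 / 2 ^ p"
    and "is_float p x" and "is_float p y" and "x \<noteq> 0 \<or> y \<noteq> 0"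
  shows "let err = \<bar>hypot4 p x y / sqrt (x^2 + y^2) - 1\<bar> in
           (p \<ge> 4 \<longrightarrow> err \<le> u + (7 + 21.4) * u^2) \<and>
           (p \<ge> 5 \<longrightarrow> err \<le> u + (7 + 6.1) * u^2) \<and>
           (p \<ge> 6 \<longrightarrow> err \<le> u + (7 + 2.5) * u^2) \<and>
           (p \<ge> 7 \<longrightarrow> err \<le> u + (7 + 1.2) * u^2) \<and>
           (p \<ge> 8 \<longrightarrow> err \<le> u + (7 + 0.6) * u^2) \<and>
           (p \<ge> 11 \<longrightarrow> err \<le> u + (7 + 7 * 10 powi -2) * u^2) \<and>
           (p \<ge> 24 \<longrightarrow> err \<le> u + (7 + 8 * 10 powi -6) * u^2) \<and>
           (p \<ge> 53 \<longrightarrow> err \<le> u + (7 + 2 * 10 powi -14) * u^2) \<and>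
           (p \<ge> 113 \<longrightarrow> err \<le> u + (7 + 2 * 10 powi -32) * u^2)"
proof -
  define E where "E = \<bar>hypot4 p x y / sqrt (x^2 + y^2) - 1\<bar>"
  have u0: "u > 0" using assms(2) by simp
  have main: "E \<le> u + 7*u^2 + 100*u^3"
  proof (cases "\<bar>x\<bar> < \<bar>y\<bar>")
    case True
    have "hypot4 p x y = core p y x" using True by (simp add: hypot4_core)
    moreover have "x^2 + y^2 = y*y + x*x" by (simp add: power2_eq_square)
    ultimately have "E = \<bar>core p y x / sqrt (y*y + x*x) - 1\<bar>" unfolding E_def by simp
    then show ?thesis using core_bound[OF assms(1), of y x] assms(5) assms(2) by auto
  next
    case False
    have "hypot4 p x y = core p x y" using False by (simp add: hypot4_core)
    moreover have "x^2 + y^2 = x*x + y*y" by (simp add: power2_eq_square)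
    ultimately have "E = \<bar>core p x y / sqrt (x*x + y*y) - 1\<bar>" unfolding E_def by simp
    then show ?thesis using core_bound[OF assms(1), of x y] assms(5) assms(2) by auto
  qed
  have T: "\<And>N k. N \<le> p \<Longrightarrow> 100 * (1/2^N) \<le> k \<Longrightarrow> E \<le> u + (7 + k) * u^2"
  proof -
    fix N k assume N: "N \<le> p" and k: "100 * (1/2^N) \<le> (k::real)"
    have "u \<le> 1/2^N" using thr[OF N] assms(2) by simp
    then have "100*u \<le> k" using k by linarith
    then show "E \<le> u + (7 + k) * u^2" by (rule fin_step[OF main u0])
  qed
  show ?thesis unfolding Let_def E_def[symmetric]
  proof (intro conjI impI)
    show "4 \<le> p \<Longrightarrow> E \<le> u + (7 + 21.4) * u^2" by (rule T[of 4]) simp_all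
    show "5 \<le> p \<Longrightarrow> E \<le> u + (7 + 6.1) * u^2" by (rule T[of 5]) simp_all
    show "6 \<le> p \<Longrightarrow> E \<le> u + (7 + 2.5) * u^2" by (rule T[of 6]) simp_all
    show "7 \<le> p \<Longrightarrow> E \<le> u + (7 + 1.2) * u^2" by (rule T[of 7]) simp_all
    show "8 \<le> p \<Longrightarrow> E \<le> u + (7 + 0.6) * u^2" by (rule T[of 8]) simp_all
    show "11 \<le> p \<Longrightarrow> E \<le> u + (7 + 7 * 10 powi -2) * u^2" by (rule T[of 11]) (simp_all add: power_int_minus)
    show "24 \<le> p \<Longrightarrow> E \<le> u + (7 + 8 * 10 powi -6) * u^2" by (rule T[of 24]) (simp_all add: power_int_minus)
    show "53 \<le> p \<Longrightarrow> E \<le> u + (7 + 2 * 10 powi -14) * u^2" by (rule T[of 53]) (simp_all add: power_int_minus)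
    show "113 \<le> p \<Longrightarrow> E \<le> u + (7 + 2 * 10 powi -32) * u^2" by (rule T[of 113]) (simp_all add: power_int_minus)
  qed
qed

end
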